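(* Let $(S,\curlyvee)$ be a $\curlyvee$-algebra and let $I$ be a relatively maximal $\lesssim$-ideal of $S$ (i.e., relatively maximal with respect to not containing some $d\in S$). Define $E_I=\{(a,b)\in S\times S: a\notin I,\ b\notin I,\ a\curlyvee b\notin I\}$ and $\epsilon_I=E_I\cup(I\times I)$. Then $\epsilon_I$ is a congruence on $(S,\curlyvee)$ and $S/\epsilon_I$ is a flat $\curlyvee$-algebra. Moreover, $S$ is a subdirect product of the algebras $S/\epsilon_I$ as $I$ ranges over all relatively maximal $\lesssim$-ideals of $S$.
   Context: A $\curlyvee$-algebra is an algebra $(S,\curlyvee)$ with one binary operation such that, defining $a\sqcup b=a\curlyvee(a\curlyvee b)$ and $a\lesssim b$ iff $b\sqcup a=b$: $\sqcup$ is associative, $a\sqcup a=a$ and $a\sqcup b=(a\sqcup b)\sqcup a$; $\curlyvee$ is commutative and idempotent; $(a\curlyvee b)\sqcup(a\sqcup b)=a\sqcup b$; $a\sqcup(b\curlyvee c)=(a\sqcup b)\curlyvee(a\sqcup c)$; and if $d\lesssim a,b,c,a\curlyvee b,b\curlyvee c$ then $d\lesssim a\curlyvee c$. A $\lesssim$-ideal is a non-empty subset $I$ that is a down-set under $\lesssim$ with $i\sqcup j\in I$ for all $i,j\in I$; it is relatively maximal with respect to not containing $d$ if $d\notin I$ and no $\lesssim$-ideal properly containing $I$ omits $d$. A flat $\curlyvee$-algebra is an algebra $(T,\curlyvee)$ with an element $0$ such that $a\curlyvee b=0$ for distinct $a,b$ both different from $0$, and $a\curlyvee a=a$, $a\curlyvee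 0=0\curlyvee a=a$ for all $a$. *)

theory Defs
  imports Main
begin

text \<open>A \<curlyvee>-algebra is represented by its binary operation f on the whole type 'a.\<close>

definition vsq :: "('a \<Rightarrow> 'a \<Rightarrow> 'a) \<Rightarrow> 'a \<Rightarrow> 'a \<Rightarrow> 'a" where
  "vsq f a b = f a (f a b)"

definition vle :: "('a \<Rightarrow> 'a \<Rightarrow> 'a) \<Rightarrow> 'a \<Rightarrow> 'a \<Rightarrow> bool" where
  "vle f a b \<longleftrightarrow> vsq f b a = b"

definition valgebra :: "('a \<Rightarrow> 'a \<Rightarrow> 'a) \<Rightarrow> bool" where
  "valgebra f \<longleftrightarrow>
     (\<forall>a b c. vsq f (vsq f a b) c = vsq f a (vsq f b c)) \<and>
     (\<forall>a. vsq f a a = a) \<and>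
     (\<forall>a b. vsq f a b = vsq f (vsq f a b) a) \<and>
     (\<forall>a b. f a b = f b a) \<and>
     (\<forall>a. f a a = a) \<and>
     (\<forall>a b. vsq f (f a b) (vsq f a b) = vsq f a b) \<and>
     (\<forall>a b c. vsq f a (f b c) = f (vsq f a b) (vsq f a c)) \<and>
     (\<forall>a b c d. vle f d a \<and> vle f d b \<and> vle f d c \<and> vle f d (f a b) \<and> vle f d (f b c)
                 \<longrightarrow> vle f d (f a c))"

definition videal :: "('a \<Rightarrow> 'a \<Rightarrow> 'a) \<Rightarrow> 'a set \<Rightarrow> bool" where
  "videal f I \<longleftrightarrow> I \<noteq> {} \<and> (\<forall>i\<in>I. \<forall>a. vle f a i \<longrightarrow> a \<in> I) \<and>
                  (\<forall>i\<in>I. \<forall>j\<in>I. vsq f i j \<in> I)"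

definition rel_max_wrt :: "('a \<Rightarrow> 'a \<Rightarrow> 'a) \<Rightarrow> 'a set \<Rightarrow> 'a \<Rightarrow> bool" where
  "rel_max_wrt f I d \<longleftrightarrow> videal f I \<and> d \<notin> I \<and>
                          (\<forall>J. videal f J \<and> I \<subset> J \<longrightarrow> d \<in> J)"

definition rel_max_ideal :: "('a \<Rightarrow> 'a \<Rightarrow> 'a) \<Rightarrow> 'a set \<Rightarrow> bool" where
  "rel_max_ideal f I \<longleftrightarrow> (\<exists>d. rel_max_wrt f I d)"

definition E_rel :: "('a \<Rightarrow> 'a \<Rightarrow> 'a) \<Rightarrow> 'a set \<Rightarrow> ('a \<times> 'a) set" where
  "E_rel f I = {(a, b). a \<notin> I \<and> b \<notin> I \<and> f a b \<notin> I}"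

definition eps_rel :: "('a \<Rightarrow> 'a \<Rightarrow> 'a) \<Rightarrow> 'a set \<Rightarrow> ('a \<times> 'a) set" where
  "eps_rel f I = E_rel f I \<union> (I \<times> I)"

definition congruence :: "('a \<Rightarrow> 'a \<Rightarrow> 'a) \<Rightarrow> ('a \<times> 'a) set \<Rightarrow> bool" where
  "congruence f \<theta> \<longleftrightarrow> equiv UNIV \<theta> \<and>
     (\<forall>a b c d. (a, b) \<in> \<theta> \<and> (c, d) \<in> \<theta> \<longrightarrow> (f a c, f b d) \<in> \<theta>)"

definition quot_op :: "('a \<Rightarrow> 'a \<Rightarrow> 'a) \<Rightarrow> ('a \<times> 'a) set \<Rightarrow> 'a set \<Rightarrow> 'a set \<Rightarrow> 'a set" where
  "quot_op f \<theta> X Y = \<theta> `` {f (SOME x. x \<in> X) (SOME y. y \<in> Y)}"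

definition flat_valgebra :: "'b set \<Rightarrow> ('b \<Rightarrow> 'b \<Rightarrow> 'b) \<Rightarrow> bool" where
  "flat_valgebra T g \<longleftrightarrow> (\<exists>z\<in>T.
      (\<forall>a\<in>T. \<forall>b\<in>T. a \<noteq> z \<and> b \<noteq> z \<and> a \<noteq> b \<longrightarrow> g a b = z) \<and>
      (\<forall>a\<in>T. g a a = a \<and> g a z = a \<and> g z a = a))"

definition subdirect_product ::
  "('a \<Rightarrow> 'a \<Rightarrow> 'a) \<Rightarrow> 'k set \<Rightarrow> ('k \<Rightarrow> 'b set) \<Rightarrow> ('k \<Rightarrow> 'b \<Rightarrow> 'b \<Rightarrow> 'b) \<Rightarrow> bool" where
  "subdirect_product f K A g \<longleftrightarrow> (\<exists>h :: 'a \<Rightarrow> 'k \<Rightarrow> 'b.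
      (\<forall>a. \<forall>k\<in>K. h a k \<in> A k) \<and>
      (\<forall>a b. \<forall>k\<in>K. h (f a b) k = g k (h a k) (h b k)) \<and>
      (\<forall>a b. (\<forall>k\<in>K. h a k = h b k) \<longrightarrow> a = b) \<and>
      (\<forall>k\<in>K. (\<lambda>a. h a k) ` UNIV = A k))"

end

theory Submission
  imports Defs
begin

locale valg =
  fixes f :: "'a \<Rightarrow> 'a \<Rightarrow> 'a"
  assumes va: "valgebra f"
begin

lemma assoc: "vsq f (vsq f a b) c = vsq f a (vsq f b c)"
  using va unfolding valgebra_def by blast
lemma sidem[simp]: "vsq f a a = a"
  using va unfolding valgebra_def by blast
lemma lrb: "vsq f (vsq f a b) a = vsq f a b"
  using va unfolding valgebra_def by metis
lemma comm: "f a b = f b a"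
  using va unfolding valgebra_def by blast
lemma fidem[simp]: "f a a = a"
  using va unfolding valgebra_def by blast
lemma a6': "vsq f (f a b) (vsq f a b) = vsq f a b"
  using va unfolding valgebra_def by blast
lemma dist: "vsq f a (f b c) = f (vsq f a b) (vsq f a c)"
  using va unfolding valgebra_def by blast
lemma a8: "vle f d a \<Longrightarrow> vle f d b \<Longrightarrow> vle f d c \<Longrightarrow> vle f d (f a b) \<Longrightarrow> vle f d (f b c)
   \<Longrightarrow> vle f d (f a c)"
proof -
  assume h: "vle f d a" "vle f d b" "vle f d c" "vle f d (f a b)" "vle f d (f b c)"
  have "\<forall>a b c d. vle f d a \<and> vle f d b \<and> vle f d c \<and> vle f d (f a b) \<and> vle f d (f b c)
                 \<longrightarrow> vle f d (f a c)"
    using va unfolding valgebra_def by (elim conjE) assumption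
  then show ?thesis using h by blast
qed

lemma R1[simp]: "vsq f x (vsq f x y) = vsq f x y"
  by (metis assoc sidem)
lemma R2[simp]: "vsq f x (vsq f y x) = vsq f x y"
  by (metis assoc lrb)
lemma R3[simp]: "vsq f x (vsq f y (vsq f x z)) = vsq f x (vsq f y z)"
  by (metis assoc lrb)
lemma R4[simp]: "vsq f x (vsq f y (vsq f z x)) = vsq f x (vsq f y z)"
  by (metis assoc R2)
lemma R5[simp]: "vsq f x (vsq f y (vsq f z (vsq f x w))) = vsq f x (vsq f y (vsq f z w))"
proof -
  have "vsq f x (vsq f (vsq f y z) (vsq f x w)) = vsq f x (vsq f (vsq f y z) w)" by (rule R3)
  then show ?thesis by (simp only: assoc)
qed

lemma key: "f (f x y) x = vsq f x y"
  by (simp add: vsq_def comm)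

lemma a6: "vle f (f a b) (vsq f a b)"
  unfolding vle_def by (metis a6' lrb)

lemma le_refl: "vle f a a" by (simp add: vle_def)
lemma le_trans: "vle f a b \<Longrightarrow> vle f b c \<Longrightarrow> vle f a c"
  unfolding vle_def by (metis assoc)
lemma le_left: "vle f a (vsq f a b)"
  unfolding vle_def by (simp add: assoc)
lemma le_right: "vle f b (vsq f a b)"
  unfolding vle_def by (simp add: assoc)
lemma le_mono: "vle f a b \<Longrightarrow> vle f c e \<Longrightarrow> vle f (vsq f a c) (vsq f b e)"
proof -
  assume h1: "vle f a b" and h2: "vle f c e"
  have ba: "vsq f b a = b" and ec: "vsq f e c = e" using h1 h2 unfolding vle_def by auto
  have "vsq f (vsq f b e) (vsq f a c) = vsq f (vsq f b a) (vsq f e (vsq f a c))"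
    by (simp only: assoc ba)
  also have "\<dots> = vsq f b (vsq f a (vsq f e (vsq f a c)))" by (simp only: assoc)
  also have "\<dots> = vsq f b (vsq f a (vsq f e c))" by (simp only: R3)
  also have "\<dots> = vsq f (vsq f b a) e" by (simp only: ec assoc)
  also have "\<dots> = vsq f b e" by (simp only: ba)
  finally show ?thesis unfolding vle_def .
qed

lemma swap_le: "vle f (vsq f x i) (vsq f i x)"
  unfolding vle_def by (simp add: assoc)

lemma ext_l: "vle f d (vsq f i p) \<Longrightarrow> vle f d (vsq f (vsq f j i) p)"
proof -
  assume h: "vle f d (vsq f i p)"
  have "vle f (vsq f i p) (vsq f (vsq f j i) p)"
    unfolding vle_def by (simp add: assoc)
  then show ?thesis using h le_trans by blast
qed
lemma ext_r: "vle f d (vsq f i p) \<Longrightarrow> vle f d (vsq f (vsq f i j) p)"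
proof -
  assume h: "vle f d (vsq f i p)"
  have "vle f (vsq f i p) (vsq f (vsq f i j) p)"
    unfolding vle_def by (simp add: assoc)
  then show ?thesis using h le_trans by blast
qed

lemma id_down: "videal f I \<Longrightarrow> i \<in> I \<Longrightarrow> vle f a i \<Longrightarrow> a \<in> I"
  unfolding videal_def by blast
lemma id_s: "videal f I \<Longrightarrow> i \<in> I \<Longrightarrow> j \<in> I \<Longrightarrow> vsq f i j \<in> I"
  unfolding videal_def by blast
lemma id_s_iff: "videal f I \<Longrightarrow> vsq f a b \<in> I \<longleftrightarrow> a \<in> I \<and> b \<in> I"
  using id_down id_s le_left le_right by blast
lemma id_join: "videal f I \<Longrightarrow> a \<in> I \<Longrightarrow> b \<in> I \<Longrightarrow> f a b \<in> I"
  using id_down id_s a6 by blast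
lemma id_N: "videal f I \<Longrightarrow> a \<in> I \<Longrightarrow> f a c \<in> I \<Longrightarrow> c \<in> I"
proof -
  assume I: "videal f I" and a: "a \<in> I" and ac: "f a c \<in> I"
  have "vle f (f a (f a c)) (vsq f a (f a c))" by (rule a6)
  moreover have "vsq f a (f a c) \<in> I" using I a ac id_s by blast
  ultimately have "f a (f a c) \<in> I" using I id_down by blast
  then have "vsq f a c \<in> I" by (simp add: vsq_def)
  then show ?thesis using I id_s_iff by blast
qed

lemma cover:
  assumes rm: "rel_max_wrt f I d" and x: "x \<notin> I"
  shows "\<exists>i\<in>I. vle f d (vsq f i x)"
proof -
  have I: "videal f I" and dI: "d \<notin> I" and mx: "\<And>J. videal f J \<Longrightarrow> I \<subset> J \<Longrightarrow> d \<in> J"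
    using rm unfolding rel_max_wrt_def by auto
  obtain i0 where i0: "i0 \<in> I" using I unfolding videal_def by auto
  define J where "J = {y. \<exists>i\<in>I. vle f y (vsq f x i)}"
  have vJ: "videal f J"
    unfolding videal_def
  proof (intro conjI ballI allI impI)
    show "J \<noteq> {}" using i0 le_left unfolding J_def by blast
  next
    fix i a assume "i \<in> J" "vle f a i" then show "a \<in> J"
      unfolding J_def using le_trans by blast
  next
    fix i j assume "i \<in> J" "j \<in> J"
    then obtain i1 i2 where "i1 \<in> I" "i2 \<in> I" "vle f i (vsq f x i1)" "vle f j (vsq f x i2)"
      unfolding J_def by blast
    moreover have e: "vsq f (vsq f x i1) (vsq f x i2) = vsq f x (vsq f i1 i2)"
      by (simp only: assoc R3)
    ultimately have "vle f (vsq f i j) (vsq f x (vsq f i1 i2))"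
      using le_mono[of i "vsq f x i1" j "vsq f x i2"] by simp
    moreover have "vsq f i1 i2 \<in> I" using id_s[OF I] \<open>i1 \<in> I\<close> \<open>i2 \<in> I\<close> by blast
    ultimately show "vsq f i j \<in> J" unfolding J_def by blast
  qed
  moreover have "I \<subseteq> J" unfolding J_def using le_right by blast
  moreover have "x \<in> J" unfolding J_def using i0 le_left by blast
  ultimately have "I \<subset> J" using x by blast
  then have "d \<in> J" using mx vJ by blast
  then obtain i where "i \<in> I" "vle f d (vsq f x i)" unfolding J_def by blast
  then show ?thesis using swap_le le_trans by blast
qed

lemma trans_key:
  assumes rm: "rel_max_wrt f I d" and "a \<notin> I" "b \<notin> I" "c \<notin> I" "f a b \<notin> I" "f b c \<notin> I"
  shows "f a c \<notin> I"
proof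
  assume ac: "f a c \<in> I"
  have I: "videal f I" and dI: "d \<notin> I" using rm unfolding rel_max_wrt_def by auto
  obtain i1 where i1: "i1 \<in> I" "vle f d (vsq f i1 a)" using cover[OF rm] assms by blast
  obtain i2 where i2: "i2 \<in> I" "vle f d (vsq f i2 b)" using cover[OF rm] assms by blast
  obtain i3 where i3: "i3 \<in> I" "vle f d (vsq f i3 c)" using cover[OF rm] assms by blast
  obtain i4 where i4: "i4 \<in> I" "vle f d (vsq f i4 (f a b))" using cover[OF rm] assms by blast
  obtain i5 where i5: "i5 \<in> I" "vle f d (vsq f i5 (f b c))" using cover[OF rm] assms by blast
  define u where "u = vsq f i1 (vsq f i2 (vsq f i3 (vsq f i4 i5)))"
  have uI: "u \<in> I" unfolding u_def
    by (intro id_s[OF I] i1(1) i2(1) i3(1) i4(1) i5(1))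
  have 1: "vle f d (vsq f u a)" unfolding u_def by (rule ext_r[OF i1(2)])
  have 2: "vle f d (vsq f u b)" unfolding u_def by (rule ext_l[OF ext_r[OF i2(2)]])
  have 3: "vle f d (vsq f u c)" unfolding u_def by (rule ext_l[OF ext_l[OF ext_r[OF i3(2)]]])
  have 4: "vle f d (vsq f u (f a b))" unfolding u_def
    by (rule ext_l[OF ext_l[OF ext_l[OF ext_r[OF i4(2)]]]])
  have 5: "vle f d (vsq f u (f b c))" unfolding u_def
    by (rule ext_l[OF ext_l[OF ext_l[OF ext_l[OF i5(2)]]]])
  have "vle f d (f (vsq f u a) (vsq f u b))" using 4 by (simp only: dist)
  moreover have "vle f d (f (vsq f u b) (vsq f u c))" using 5 by (simp only: dist)
  ultimately have "vle f d (f (vsq f u a) (vsq f u c))" using a8[OF 1 2 3] by blast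
  then have "vle f d (vsq f u (f a c))" by (simp add: dist)
  moreover have "vsq f u (f a c) \<in> I" using uI ac id_s[OF I] by blast
  ultimately show False using dI id_down[OF I] by blast
qed

lemma eps_iff: "(a, b) \<in> eps_rel f I \<longleftrightarrow> (a \<notin> I \<and> b \<notin> I \<and> f a b \<notin> I) \<or> (a \<in> I \<and> b \<in> I)"
  unfolding eps_rel_def E_rel_def by auto

lemma eps_equiv:
  assumes rm: "rel_max_wrt f I d"
  shows "equiv UNIV (eps_rel f I)"
proof (rule equivI)
  show "eps_rel f I \<subseteq> UNIV \<times> UNIV" by simp
  show "refl_on UNIV (eps_rel f I)" unfolding refl_on_def by (auto simp: eps_iff)
  show "sym (eps_rel f I)" by (rule symI) (auto simp: eps_iff comm)
  show "trans (eps_rel f I)"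
  proof (rule transI)
    fix x y z assume "(x, y) \<in> eps_rel f I" "(y, z) \<in> eps_rel f I"
    then show "(x, z) \<in> eps_rel f I" using trans_key[OF rm, of x y z] by (auto simp: eps_iff)
  qed
qed

lemma P_lem:
  assumes I: "videal f I" and x: "x \<notin> I" and xy: "f x y \<notin> I"
  shows "(f x y, x) \<in> eps_rel f I"
proof -
  have "f (f x y) x = vsq f x y" by (rule key)
  moreover have "vsq f x y \<notin> I" using x id_s_iff[OF I] by blast
  ultimately show ?thesis using x xy by (simp add: eps_iff)
qed

lemma R_lem:
  assumes rm: "rel_max_wrt f I d" and ab: "(a, b) \<in> eps_rel f I"
  shows "(f a c, f b c) \<in> eps_rel f I"
proof -
  have I: "videal f I" using rm unfolding rel_max_wrt_def by auto
  have eq: "equiv UNIV (eps_rel f I)" by (rule eps_equiv[OF rm])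
  have sy: "\<And>x y. (x, y) \<in> eps_rel f I \<Longrightarrow> (y, x) \<in> eps_rel f I"
    using eq unfolding equiv_def sym_def by blast
  have tr: "\<And>x y z. (x, y) \<in> eps_rel f I \<Longrightarrow> (y, z) \<in> eps_rel f I \<Longrightarrow> (x, z) \<in> eps_rel f I"
    using eq unfolding equiv_def trans_def by blast
  have Nn: "\<And>x y. x \<in> I \<Longrightarrow> y \<notin> I \<Longrightarrow> f x y \<notin> I" using id_N[OF I] by blast
  show ?thesis
  proof (cases "a \<in> I")
    case aI: True
    then have bI: "b \<in> I" using ab by (auto simp: eps_iff)
    show ?thesis
    proof (cases "c \<in> I")
      case True
      then show ?thesis using aI bI id_join[OF I] by (simp add: eps_iff)
    next
      case False
      have "f c a \<notin> I" "f c b \<notin> I" using Nn aI bI False comm by metis+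
      then have "(f c a, c) \<in> eps_rel f I" "(f c b, c) \<in> eps_rel f I"
        using P_lem[OF I] False by auto
      then show ?thesis using sy tr comm by metis
    qed
  next
    case aO: False
    then have bO: "b \<notin> I" and abO: "f a b \<notin> I" using ab by (auto simp: eps_iff)
    show ?thesis
    proof (cases "c \<in> I")
      case True
      have "f a c \<notin> I" "f b c \<notin> I" using Nn aO bO True comm by metis+
      then have "(f a c, a) \<in> eps_rel f I" "(f b c, b) \<in> eps_rel f I"
        using P_lem[OF I] aO bO by auto
      then show ?thesis using sy tr ab by metis
    next
      case cO: False
      show ?thesis
      proof (cases "f a c \<in> I")
        case True
        have "f b c \<in> I"
        proof (rule ccontr)
          assume "f b c \<notin> I"
          then have "f a c \<notin> I" using trans_key[OF rm, of a b c] aO bO cO abO by blast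
          then show False using True by blast
        qed
        then show ?thesis using True by (simp add: eps_iff)
      next
        case False
        have "f b a \<notin> I" using abO comm by metis
        then have "f b c \<notin> I" using trans_key[OF rm, of b a c] aO bO cO False by blast
        then have "(f a c, a) \<in> eps_rel f I" "(f b c, b) \<in> eps_rel f I"
          using P_lem[OF I] aO bO False by auto
        then show ?thesis using sy tr ab by metis
      qed
    qed
  qed
qed

lemma eps_cong:
  assumes rm: "rel_max_wrt f I d"
  shows "congruence f (eps_rel f I)"
  unfolding congruence_def
proof (intro conjI allI impI)
  show eq: "equiv UNIV (eps_rel f I)" by (rule eps_equiv[OF rm])
  fix a b c e assume h: "(a, b) \<in> eps_rel f I \<and> (c, e) \<in> eps_rel f I"
  have 1: "(f a c, f b c) \<in> eps_rel f I" using R_lem[OF rm] h by blast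
  have "(f c b, f e b) \<in> eps_rel f I" using R_lem[OF rm] h by blast
  then have 2: "(f b c, f b e) \<in> eps_rel f I" using comm by metis
  show "(f a c, f b e) \<in> eps_rel f I" using 1 2 eq unfolding equiv_def trans_def by blast
qed

lemma quot_class:
  assumes eq: "congruence f \<theta>"
  shows "quot_op f \<theta> (\<theta> `` {a}) (\<theta> `` {b}) = \<theta> `` {f a b}"
proof -
  have e: "equiv UNIV \<theta>" using eq unfolding congruence_def by blast
  have ne: "\<And>a. \<exists>x. x \<in> \<theta> `` {a}" using e unfolding equiv_def refl_on_def by blast
  define x where "x = (SOME x. x \<in> \<theta> `` {a})"
  define y where "y = (SOME y. y \<in> \<theta> `` {b})"
  have "x \<in> \<theta> `` {a}" unfolding x_def using ne someI_ex by metis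
  moreover have "y \<in> \<theta> `` {b}" unfolding y_def using ne someI_ex by metis
  ultimately have "(a, x) \<in> \<theta>" "(b, y) \<in> \<theta>" by auto
  then have "(f a b, f x y) \<in> \<theta>" using eq unfolding congruence_def by blast
  then have "\<theta> `` {f a b} = \<theta> `` {f x y}" using equiv_class_eq[OF e] by blast
  then show ?thesis unfolding quot_op_def x_def y_def by simp
qed

lemma flat:
  assumes rm: "rel_max_wrt f I d"
  shows "flat_valgebra (UNIV // eps_rel f I) (quot_op f (eps_rel f I))"
proof -
  have I: "videal f I" using rm unfolding rel_max_wrt_def by auto
  obtain i0 where i0: "i0 \<in> I" using I unfolding videal_def by auto
  have cg: "congruence f (eps_rel f I)" by (rule eps_cong[OF rm])
  have eq: "equiv UNIV (eps_rel f I)" by (rule eps_equiv[OF rm])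
  have ceq: "\<And>x y. eps_rel f I `` {x} = eps_rel f I `` {y} \<longleftrightarrow> (x, y) \<in> eps_rel f I"
    using eq_equiv_class_iff[OF eq] by blast
  let ?z = "eps_rel f I `` {i0}"
  show ?thesis unfolding flat_valgebra_def
  proof (intro bexI[of _ ?z] conjI ballI impI)
    show "?z \<in> UNIV // eps_rel f I" by (rule quotientI) simp
  next
    fix X Y assume X: "X \<in> UNIV // eps_rel f I" and Y: "Y \<in> UNIV // eps_rel f I"
      and h: "X \<noteq> ?z \<and> Y \<noteq> ?z \<and> X \<noteq> Y"
    obtain a where a: "X = eps_rel f I `` {a}" using X by (auto elim: quotientE)
    obtain b where b: "Y = eps_rel f I `` {b}" using Y by (auto elim: quotientE)
    have "a \<notin> I" "b \<notin> I" "(a, b) \<notin> eps_rel f I" using h a b ceq i0 by (auto simp: eps_iff)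
    then have "f a b \<in> I" by (auto simp: eps_iff)
    then have "(f a b, i0) \<in> eps_rel f I" using i0 by (simp add: eps_iff)
    then show "quot_op f (eps_rel f I) X Y = ?z" using a b quot_class[OF cg] ceq by metis
  next
    fix X assume X: "X \<in> UNIV // eps_rel f I"
    obtain a where a: "X = eps_rel f I `` {a}" using X by (auto elim: quotientE)
    have ai: "(f a i0, a) \<in> eps_rel f I"
    proof (cases "a \<in> I")
      case True then show ?thesis using i0 id_join[OF I] by (simp add: eps_iff)
    next
      case False
      have "f a i0 \<notin> I" using id_N[OF I] i0 False comm by metis
      then show ?thesis using P_lem[OF I] False by blast
    qed
    show "quot_op f (eps_rel f I) X X = X" using a quot_class[OF cg] by simp
    show "quot_op f (eps_rel f I) X ?z = X" using a quot_class[OF cg] ai ceq by metis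
    show "quot_op f (eps_rel f I) ?z X = X" using a quot_class[OF cg] ai ceq comm by metis
  qed
qed

lemma extend:
  assumes J: "videal f J" and d: "d \<notin> J"
  shows "\<exists>I. rel_max_wrt f I d \<and> J \<subseteq> I"
proof -
  define A where "A = {I. videal f I \<and> d \<notin> I \<and> J \<subseteq> I}"
  have "\<forall>C\<in>chains A. \<exists>U\<in>A. \<forall>X\<in>C. X \<subseteq> U"
  proof
    fix C assume C: "C \<in> chains A"
    show "\<exists>U\<in>A. \<forall>X\<in>C. X \<subseteq> U"
    proof (cases "C = {}")
      case True then show ?thesis using J d unfolding A_def by auto
    next
      case False
      have CA: "C \<subseteq> A" and ch: "\<And>X Y. X \<in> C \<Longrightarrow> Y \<in> C \<Longrightarrow> X \<subseteq> Y \<or> Y \<subseteq> X"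
        using C unfolding chains_def chain_subset_def by auto
      have "videal f (\<Union>C)" unfolding videal_def
      proof (intro conjI ballI allI impI)
        obtain X0 where "X0 \<in> C" using False by blast
        then have "X0 \<noteq> {}" using CA unfolding A_def videal_def by blast
        then show "\<Union>C \<noteq> {}" using \<open>X0 \<in> C\<close> by blast
      next
        fix i a assume "i \<in> \<Union>C" "vle f a i" then show "a \<in> \<Union>C"
          using CA unfolding A_def videal_def by blast
      next
        fix i j assume "i \<in> \<Union>C" "j \<in> \<Union>C"
        then obtain X Y where "X \<in> C" "Y \<in> C" "i \<in> X" "j \<in> Y" by blast
        then show "vsq f i j \<in> \<Union>C" using ch CA unfolding A_def videal_def by blast
      qed
      moreover have "d \<notin> \<Union>C" "J \<subseteq> \<Union>C" using CA False unfolding A_def by auto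
      ultimately show ?thesis unfolding A_def by blast
    qed
  qed
  then obtain M where M: "M \<in> A" and mx: "\<forall>X\<in>A. M \<subseteq> X \<longrightarrow> X = M"
    using Zorn_Lemma2 by blast
  have "rel_max_wrt f M d" unfolding rel_max_wrt_def
  proof (intro conjI allI impI)
    show "videal f M" "d \<notin> M" using M unfolding A_def by auto
    fix K assume K: "videal f K \<and> M \<subset> K"
    show "d \<in> K"
    proof (rule ccontr)
      assume "d \<notin> K"
      then have "K \<in> A" using K M unfolding A_def by auto
      then show False using mx K by blast
    qed
  qed
  then show ?thesis using M unfolding A_def by blast
qed

lemma principal: "videal f {y. vle f y b}"
  unfolding videal_def
proof (intro conjI ballI allI impI)
  show "{y. vle f y b} \<noteq> {}" using le_refl by blast
next
  fix i a assume "i \<in> {y. vle f y b}" "vle f a i" then show "a \<in> {y. vle f y b}"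
    using le_trans by blast
next
  fix i j assume "i \<in> {y. vle f y b}" "j \<in> {y. vle f y b}"
  then have "vle f (vsq f i j) (vsq f b b)" using le_mono by blast
  then show "vsq f i j \<in> {y. vle f y b}" by simp
qed


lemma separate2:
  assumes ab: "a \<noteq> b"
  shows "\<exists>I d. rel_max_wrt f I d \<and> (a, b) \<notin> eps_rel f I"
proof (cases "vle f a b")
  case False
  obtain I where I: "rel_max_wrt f I a" "{y. vle f y b} \<subseteq> I"
    using extend[OF principal, of a b] False by auto
  have "b \<in> I" "a \<notin> I" using I le_refl unfolding rel_max_wrt_def by auto
  then show ?thesis using I by (auto simp: eps_iff)
next
  case ab1: True
  show ?thesis
  proof (cases "vle f b a")
    case False
    obtain I where I: "rel_max_wrt f I b" "{y. vle f y a} \<subseteq> I"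
      using extend[OF principal, of b a] False by auto
    have "a \<in> I" "b \<notin> I" using I le_refl unfolding rel_max_wrt_def by auto
    then show ?thesis using I by (auto simp: eps_iff)
  next
    case ba: True
    define c where "c = f a b"
    have sab: "vsq f a b = a" using ba unfolding vle_def .
    have sba: "vsq f b a = b" using ab1 unfolding vle_def .
    have "\<not> vle f a c"
    proof
      assume "vle f a c"
      then have 1: "vsq f c a = c" unfolding vle_def .
      have "f c a = a" unfolding c_def using key sab by metis
      then have "vsq f c a = a" by (simp add: vsq_def)
      then have "c = a" using 1 by simp
      then have "f a b = a" unfolding c_def .
      moreover have "b = f b (f b a)" using sba by (simp add: vsq_def)
      ultimately show False using ab comm by metis
    qed
    then obtain I where I: "rel_max_wrt f I a" "{y. vle f y c} \<subseteq> I"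
      using extend[OF principal, of a c] by auto
    have Iv: "videal f I" using I unfolding rel_max_wrt_def by auto
    have "c \<in> I" "a \<notin> I" using I le_refl unfolding rel_max_wrt_def by auto
    moreover have "b \<notin> I" using \<open>a \<notin> I\<close> ab1 id_down[OF Iv] by blast
    ultimately show ?thesis using I unfolding c_def by (auto simp: eps_iff)
  qed
qed

end

theorem lemma4p6:
  fixes f :: "'a \<Rightarrow> 'a \<Rightarrow> 'a"
  assumes "valgebra f"
  shows "(\<forall>I. rel_max_ideal f I \<longrightarrow>
            congruence f (eps_rel f I) \<and>
            flat_valgebra (UNIV // eps_rel f I) (quot_op f (eps_rel f I))) \<and>
         subdirect_product f {I. rel_max_ideal f I}
            (\<lambda>I. UNIV // eps_rel f I) (\<lambda>I. quot_op f (eps_rel f I))"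
proof -
  interpret valg f by (rule valg.intro[OF assms])
  have A: "\<forall>I. rel_max_ideal f I \<longrightarrow>
            congruence f (eps_rel f I) \<and>
            flat_valgebra (UNIV // eps_rel f I) (quot_op f (eps_rel f I))"
    unfolding rel_max_ideal_def using eps_cong flat by blast
  have B: "subdirect_product f {I. rel_max_ideal f I}
            (\<lambda>I. UNIV // eps_rel f I) (\<lambda>I. quot_op f (eps_rel f I))"
    unfolding subdirect_product_def
  proof (intro exI[of _ "\<lambda>a I. eps_rel f I `` {a}"] conjI allI ballI impI)
    fix a I assume "I \<in> {I. rel_max_ideal f I}"
    then show "eps_rel f I `` {a} \<in> UNIV // eps_rel f I" by (auto intro: quotientI)
  next
    fix a b I assume "I \<in> {I. rel_max_ideal f I}"
    then have "congruence f (eps_rel f I)" using A by blast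
    then show "eps_rel f I `` {f a b} = quot_op f (eps_rel f I) (eps_rel f I `` {a}) (eps_rel f I `` {b})"
      using quot_class by metis
  next
    fix a b assume h: "\<forall>I\<in>{I. rel_max_ideal f I}. eps_rel f I `` {a} = eps_rel f I `` {b}"
    show "a = b"
    proof (rule ccontr)
      assume "a \<noteq> b"
      then obtain I d where I: "rel_max_wrt f I d" "(a, b) \<notin> eps_rel f I"
        using separate2 by blast
      have "eps_rel f I `` {a} = eps_rel f I `` {b}" using h I unfolding rel_max_ideal_def by blast
      then show False using eq_equiv_class_iff[OF eps_equiv[OF I(1)]] I(2) by blast
    qed
  next
    fix I assume "I \<in> {I. rel_max_ideal f I}"
    show "(\<lambda>a. eps_rel f I `` {a}) ` UNIV = UNIV // eps_rel f I"
      unfolding quotient_def by blast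
  qed
  show ?thesis using A B by blast
qed

end
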